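(* Let $b:\omega\to(\omega+1)\smallsetminus\{0\}$ and $h\in\omega^\omega$ satisfy $\lim_{i\to\infty}h(i)/b(i)=0$ (reading $h(i)/b(i)$ as $0$ when $b(i)=\omega$), and let $D$ be a non-principal ultrafilter on $\omega$. If $G$ is $\mathbb{E}^h_b$-generic over $V$, then in $V[G]$ there is an ultrafilter $D^*$ on $\mathcal{P}(\omega)\cap V[G]$ extending $D$ such that for every $(s,m)\in\mathrm{seq}_{<\omega}(b)\times\omega$ and every sequence $\bar p=\langle p_n:n<\omega\rangle\in V$ of members of $\mathbb{E}^h_b(s,m)$ whose $D$-limit belongs to $G$, the set $\{n<\omega:p_n\in G\}$ belongs to $D^*$. In particular, $\mathbb{E}^h_b$ is $\sigma$-uf-linked.
   Context: $\mathrm{seq}_{<\omega}(b)=\bigcup_{n<\omega}\prod_{i<n}b(i)$; for $g\in\omega^\omega$, $\mathcal{S}(b,g)=\prod_{i<\omega}[b(i)]^{\le g(i)}$. The poset $\mathbb{E}^h_b$ consists of pairs $p=(s,\varphi)$ for which there is $m<\omega$ with $s\in\mathrm{seq}_{<\omega}(b)$, $\varphi\in\mathcal{S}(b,m\cdot h)$ and $m\cdot h(i)<b(i)$ for all $i\ge|s|$; let $m_p$ be the least such $m$. The order: $(t,\psi)\le(s,\varphi)$ iff $s\subseteq t$, $\varphi(i)\subseteq\psi(i)$ for all $i$, and $t(i)\notin\varphi(i)$ for all $i\in|t|\smallsetminus|s|$. $\mathbb{E}^h_b(s,m)=\{(t,\varphi)\in\mathbb{E}^h_b:t=s,\ m_{(t,\varphi)}\le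 m\}$. If $p_n=(s,\varphi_n)\in\mathbb{E}^h_b(s,m)$ for all $n$, the $D$-limit of $\langle p_n\rangle$ is $(s,\varphi)$ where $k\in\varphi(i)$ iff $\{n:k\in\varphi_n(i)\}\in D$. A subset $Q$ of a poset $\mathbb{P}$ is uf-linked if for every non-principal ultrafilter $D'$ on $\omega$ and every sequence $\langle p_n\rangle$ in $Q$ some $q\in\mathbb{P}$ forces $\{n:p_n\in\dot G\}$ to meet every member of $D'$; $\mathbb{P}$ is $\sigma$-uf-linked if it is a countable union of uf-linked sets. *)

theory Defs
  imports Complex_Main "HOL-Library.Extended_Nat" "HOL-Library.Sublist"
begin

type_synonym cond = "nat list \<times> (nat \<Rightarrow> nat set)"

text \<open>b : omega -> (omega+1) - {0} is modelled as nat => enat, with infinity standing for omega;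
  "k in b(i)" means enat k < b i.\<close>

definition seq_b :: "(nat \<Rightarrow> enat) \<Rightarrow> nat list set" where
  "seq_b b = {s. \<forall>i<length s. enat (s ! i) < b i}"

definition S_bg :: "(nat \<Rightarrow> enat) \<Rightarrow> (nat \<Rightarrow> nat) \<Rightarrow> (nat \<Rightarrow> nat set) set" where
  "S_bg b g = {\<phi>. \<forall>i. \<phi> i \<subseteq> {k. enat k < b i} \<and> finite (\<phi> i) \<and> card (\<phi> i) \<le> g i}"

definition cond_with :: "(nat \<Rightarrow> enat) \<Rightarrow> (nat \<Rightarrow> nat) \<Rightarrow> nat \<Rightarrow> cond \<Rightarrow> bool" where
  "cond_with b h m p \<longleftrightarrow> fst p \<in> seq_b b \<and> snd p \<in> S_bg b (\<lambda>i. m * h i)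
      \<and> (\<forall>i\<ge>length (fst p). enat (m * h i) < b i)"

definition Ebh :: "(nat \<Rightarrow> enat) \<Rightarrow> (nat \<Rightarrow> nat) \<Rightarrow> cond set" where
  "Ebh b h = {p. \<exists>m. cond_with b h m p}"

definition m_of :: "(nat \<Rightarrow> enat) \<Rightarrow> (nat \<Rightarrow> nat) \<Rightarrow> cond \<Rightarrow> nat" where
  "m_of b h p = (LEAST m. cond_with b h m p)"

definition le_E :: "cond \<Rightarrow> cond \<Rightarrow> bool" where
  "le_E q p \<longleftrightarrow> prefix (fst p) (fst q) \<and> (\<forall>i. snd p i \<subseteq> snd q i)
      \<and> (\<forall>i. length (fst p) \<le> i \<and> i < length (fst q) \<longrightarrow> fst q ! i \<notin> snd p i)"

definition Ebh_sm :: "(nat \<Rightarrow> enat) \<Rightarrow> (nat \<Rightarrow> nat) \<Rightarrow> nat list \<Rightarrow> nat \<Rightarrow> cond set" where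
  "Ebh_sm b h s m = {p \<in> Ebh b h. fst p = s \<and> m_of b h p \<le> m}"

definition D_limit :: "nat set set \<Rightarrow> nat list \<Rightarrow> (nat \<Rightarrow> cond) \<Rightarrow> cond" where
  "D_limit D s ps = (s, \<lambda>i. {k. {n. k \<in> snd (ps n) i} \<in> D})"

definition nonprincipal_ultrafilter :: "nat set set \<Rightarrow> bool" where
  "nonprincipal_ultrafilter D \<longleftrightarrow> UNIV \<in> D \<and> {} \<notin> D
     \<and> (\<forall>A B. A \<in> D \<and> A \<subseteq> B \<longrightarrow> B \<in> D)
     \<and> (\<forall>A B. A \<in> D \<and> B \<in> D \<longrightarrow> A \<inter> B \<in> D)
     \<and> (\<forall>A. A \<in> D \<or> - A \<in> D)
     \<and> (\<forall>A. finite A \<longrightarrow> A \<notin> D)"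

definition compatible :: "'a set \<Rightarrow> ('a \<Rightarrow> 'a \<Rightarrow> bool) \<Rightarrow> 'a \<Rightarrow> 'a \<Rightarrow> bool" where
  "compatible P le p q \<longleftrightarrow> (\<exists>r\<in>P. le r p \<and> le r q)"

definition forces_in_G :: "'a set \<Rightarrow> ('a \<Rightarrow> 'a \<Rightarrow> bool) \<Rightarrow> 'a \<Rightarrow> 'a \<Rightarrow> bool" where
  "forces_in_G P le q p \<longleftrightarrow> p \<in> P \<and> (\<forall>r\<in>P. le r q \<longrightarrow> compatible P le r p)"

text \<open>Q is uf-linked: for every nonprincipal ultrafilter D' and every sequence in Q,
  some q forces that {n. p_n in G} meets every member of D', i.e. below q the set
  of conditions extending some p_n with n in A is dense, for each A in D'.\<close>
definition uf_linked :: "'a set \<Rightarrow> ('a \<Rightarrow> 'a \<Rightarrow> bool) \<Rightarrow> 'a set \<Rightarrow> bool" where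
  "uf_linked P le Q \<longleftrightarrow> (\<forall>D'. nonprincipal_ultrafilter D' \<longrightarrow>
     (\<forall>ps. (\<forall>n. ps n \<in> Q) \<longrightarrow>
       (\<exists>q\<in>P. \<forall>A\<in>D'. \<forall>r\<in>P. le r q \<longrightarrow> (\<exists>n\<in>A. compatible P le r (ps n)))))"

definition sigma_uf_linked :: "'a set \<Rightarrow> ('a \<Rightarrow> 'a \<Rightarrow> bool) \<Rightarrow> bool" where
  "sigma_uf_linked P le \<longleftrightarrow> (\<exists>Q :: nat \<Rightarrow> 'a set. P = (\<Union>k. Q k) \<and> (\<forall>k. uf_linked P le (Q k)))"

end

theory Submission
  imports Defs "HOL-Library.Countable"
begin

lemma uf_UNIV: "nonprincipal_ultrafilter D \<Longrightarrow> UNIV \<in> D"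
  unfolding nonprincipal_ultrafilter_def by blast
lemma uf_empty: "nonprincipal_ultrafilter D \<Longrightarrow> {} \<notin> D"
  unfolding nonprincipal_ultrafilter_def by blast
lemma uf_mono: "nonprincipal_ultrafilter D \<Longrightarrow> A \<in> D \<Longrightarrow> A \<subseteq> B \<Longrightarrow> B \<in> D"
  unfolding nonprincipal_ultrafilter_def by blast
lemma uf_int: "nonprincipal_ultrafilter D \<Longrightarrow> A \<in> D \<Longrightarrow> B \<in> D \<Longrightarrow> A \<inter> B \<in> D"
  unfolding nonprincipal_ultrafilter_def by blast
lemma uf_compl: "nonprincipal_ultrafilter D \<Longrightarrow> A \<notin> D \<Longrightarrow> - A \<in> D"
  unfolding nonprincipal_ultrafilter_def by blast
lemma uf_nonempty: "nonprincipal_ultrafilter D \<Longrightarrow> A \<in> D \<Longrightarrow> \<exists>n. n \<in> A"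
  using uf_empty[of D] by (metis equals0I)

lemma uf_INT:
  assumes D: "nonprincipal_ultrafilter D" and "finite I"
  shows "(\<And>x. x \<in> I \<Longrightarrow> F x \<in> D) \<Longrightarrow> (\<Inter>x\<in>I. F x) \<in> D"
  using assms(2)
proof (induction I rule: finite_induct)
  case empty
  then show ?case using uf_UNIV[OF D] by simp
next
  case (insert x I)
  then show ?case using uf_int[OF D] by simp
qed

lemma prefix_nth': "prefix xs ys \<Longrightarrow> i < length xs \<Longrightarrow> ys ! i = xs ! i"
  by (auto simp: prefix_def nth_append)

lemma le_E_refl: "le_E p p"
  unfolding le_E_def by auto

lemma le_E_trans:
  assumes "le_E r q" "le_E q p" shows "le_E r p"
proof -
  have a: "prefix (fst q) (fst r)" "\<forall>i. snd q i \<subseteq> snd r i"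
    "\<forall>i. length (fst q) \<le> i \<and> i < length (fst r) \<longrightarrow> fst r ! i \<notin> snd q i"
    using assms(1) unfolding le_E_def by auto
  have b: "prefix (fst p) (fst q)" "\<forall>i. snd p i \<subseteq> snd q i"
    "\<forall>i. length (fst p) \<le> i \<and> i < length (fst q) \<longrightarrow> fst q ! i \<notin> snd p i"
    using assms(2) unfolding le_E_def by auto
  have "fst r ! i \<notin> snd p i" if "length (fst p) \<le> i" "i < length (fst r)" for i
  proof (cases "i < length (fst q)")
    case True
    then show ?thesis using prefix_nth'[OF a(1) True] b(3) that by auto
  next
    case False
    then show ?thesis by (metis a(3) b(2) that False not_less subsetD)
  qed
  then show ?thesis unfolding le_E_def using a b prefix_order.trans by blast
qed

lemma m_of_cond: "p \<in> Ebh b h \<Longrightarrow> cond_with b h (m_of b h p) p"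
  unfolding Ebh_def m_of_def by (auto intro: LeastI_ex)

lemma eventually_bound:
  assumes lim: "(\<lambda>i. if b i = \<infinity> then 0 else real (h i) / real (the_enat (b i))) \<longlonglongrightarrow> 0"
    and nz: "\<forall>i. b i \<noteq> 0"
  shows "\<exists>N. \<forall>i\<ge>N. enat (m * h i) < b i"
proof -
  have "0 < 1 / (real m + 1)" by simp
  from order_tendstoD(2)[OF lim this]
  obtain N where N: "\<And>i. i \<ge> N \<Longrightarrow>
      (if b i = \<infinity> then 0 else real (h i) / real (the_enat (b i))) < 1 / (real m + 1)"
    unfolding eventually_sequentially by blast
  have "enat (m * h i) < b i" if "i \<ge> N" for i
  proof (cases "b i")
    case (enat B)
    with nz have B: "B > 0" by (metis gr0I zero_enat_def)
    from N[OF that] enat have "real (h i) / real B < 1 / (real m + 1)" by simp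
    then have "real (h i) * (real m + 1) < real B" using B
      by (simp add: field_simps)
    then have "real m * real (h i) < real B"
      by (simp add: algebra_simps)
    then have "real (m * h i) < real B" by simp
    then have "m * h i < B" by (simp only: of_nat_less_iff)
    then show ?thesis using enat by simp
  next
    case infinity
    then show ?thesis by simp
  qed
  then show ?thesis by blast
qed

lemma ex_avoid:
  assumes "finite F" "enat (card F) < b"
  shows "\<exists>x. enat x < b \<and> x \<notin> F"
proof (cases b)
  case (enat B)
  show ?thesis
  proof (rule ccontr)
    assume "\<not> ?thesis"
    then have "{..<B} \<subseteq> F" using enat by auto
    then have "card {..<B} \<le> card F" using assms(1) card_mono by blast
    then show False using assms(2) enat by simp
  qed
next
  case infinity
  obtain x where "x \<notin> F" using ex_new_if_finite[OF infinite_UNIV_nat assms(1)] by blast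
  then show ?thesis using infinity by auto
qed

lemma core:
  fixes k :: nat and P :: "nat \<Rightarrow> nat \<Rightarrow> cond"
  assumes D: "nonprincipal_ultrafilter D"
    and bnd: "\<And>m. \<exists>N. \<forall>i\<ge>N. enat (m * h i) < b i"
    and r: "cond_with b h mr r"
    and P: "\<And>j n i. j < k \<Longrightarrow> fst (P j n) = S j \<and> snd (P j n) i \<subseteq> {x. enat x < b i}
                 \<and> finite (snd (P j n) i) \<and> card (snd (P j n) i) \<le> M j * h i"
    and le: "\<And>j. j < k \<Longrightarrow> le_E r (D_limit D (S j) (P j))"
    and A: "A \<in> D"
  shows "\<exists>n\<in>A. \<exists>r'\<in>Ebh b h. le_E r' r \<and> (\<forall>j<k. le_E r' (P j n))"
proof -
  obtain t \<psi> where rtp: "r = (t, \<psi>)" by (cases r)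
  have tseq: "t \<in> seq_b b" and psiS: "\<psi> \<in> S_bg b (\<lambda>i. mr * h i)"
    and tb: "\<forall>i\<ge>length t. enat (mr * h i) < b i"
    using r rtp unfolding cond_with_def by auto
  have psi: "\<psi> i \<subseteq> {x. enat x < b i}" "finite (\<psi> i)" "card (\<psi> i) \<le> mr * h i" for i
    using psiS unfolding S_bg_def by auto
  define m' where "m' = mr + (\<Sum>j<k. M j)"
  obtain N where N: "\<forall>i\<ge>N. enat (m' * h i) < b i" using bnd by blast
  define N' where "N' = max N (length t)"
  define x where "x i = (SOME y. enat y < b i \<and> y \<notin> \<psi> i)" for i
  have x: "enat (x i) < b i \<and> x i \<notin> \<psi> i" if "i \<ge> length t" for i
  proof -
    have "enat (card (\<psi> i)) \<le> enat (mr * h i)" using psi(3) by simp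
    also have "\<dots> < b i" using tb that by blast
    finally have "\<exists>y. enat y < b i \<and> y \<notin> \<psi> i" using ex_avoid psi(2) by blast
    then show ?thesis unfolding x_def by (rule someI_ex)
  qed
  define u where "u = t @ map x [length t..<N']"
  have lu: "length u = N'" unfolding u_def N'_def by simp
  have u_lt: "u ! i = t ! i" if "i < length t" for i
    using that unfolding u_def by (simp add: nth_append)
  have u_ge: "u ! i = x i" if "length t \<le> i" "i < N'" for i
    using that unfolding u_def by (simp add: nth_append)
  have pre: "prefix t u" unfolding u_def by simp
  define L where "L j i = {y. {n. y \<in> snd (P j n) i} \<in> D}" for j i
  have leL: "prefix (S j) t \<and> (\<forall>i. L j i \<subseteq> \<psi> i) \<and>
       (\<forall>i. length (S j) \<le> i \<and> i < length t \<longrightarrow> t ! i \<notin> L j i)" if "j < k" for j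
    using le[OF that] unfolding le_E_def D_limit_def L_def rtp by simp
  have notL: "u ! i \<notin> L j i" if "j < k" "length (S j) \<le> i" "i < N'" for j i
  proof (cases "i < length t")
    case True
    then show ?thesis using u_lt leL[OF that(1)] that by auto
  next
    case False
    then have "u ! i \<notin> \<psi> i" using u_ge x that by auto
    then show ?thesis using leL[OF that(1)] by blast
  qed
  have inD: "{n. length (S j) \<le> i \<longrightarrow> u ! i \<notin> snd (P j n) i} \<in> D"
    if "j < k" "i < N'" for j i
  proof (cases "length (S j) \<le> i")
    case True
    then have "{n. u ! i \<in> snd (P j n) i} \<notin> D" using notL[OF that(1) True that(2)]
      unfolding L_def by simp
    from uf_compl[OF D this] show ?thesis using True by (simp add: Collect_neg_eq)
  next
    case False
    then show ?thesis using uf_UNIV[OF D] by simp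
  qed
  define B where "B = (\<Inter>p\<in>{..<k} \<times> {..<N'}.
      {n. length (S (fst p)) \<le> snd p \<longrightarrow> u ! (snd p) \<notin> snd (P (fst p) n) (snd p)})"
  have fin: "finite ({..<k} \<times> {..<N'})" by simp
  have "B \<in> D" unfolding B_def
    by (rule uf_INT[OF D fin]) (use inD in auto)
  then have "A \<inter> B \<in> D" using uf_int[OF D A] by blast
  then obtain n where nA: "n \<in> A" and nB: "n \<in> B" using uf_nonempty[OF D] by blast
  have nB': "u ! i \<notin> snd (P j n) i" if "j < k" "length (S j) \<le> i" "i < N'" for j i
    using nB that unfolding B_def by auto
  define \<chi> where "\<chi> i = \<psi> i \<union> (\<Union>j<k. snd (P j n) i)" for i
  define r' where "r' = (u, \<chi>)"
  have useq: "u \<in> seq_b b"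
    unfolding seq_b_def
  proof (intro CollectI allI impI)
    fix i assume "i < length u"
    show "enat (u ! i) < b i"
    proof (cases "i < length t")
      case True
      then show ?thesis using u_lt tseq unfolding seq_b_def by auto
    next
      case False
      then show ?thesis using u_ge x \<open>i < length u\<close> lu by auto
    qed
  qed
  have chiS: "\<chi> \<in> S_bg b (\<lambda>i. m' * h i)"
    unfolding S_bg_def
  proof (intro CollectI allI conjI)
    fix i
    show "\<chi> i \<subseteq> {x. enat x < b i}" using psi(1) P unfolding \<chi>_def by blast
    show fin: "finite (\<chi> i)" using psi(2) P unfolding \<chi>_def by auto
    have c1: "card (\<chi> i) \<le> card (\<psi> i) + card (\<Union>j<k. snd (P j n) i)"
      unfolding \<chi>_def by (rule card_Un_le)
    have c2: "card (\<Union>j<k. snd (P j n) i) \<le> (\<Sum>j<k. card (snd (P j n) i))"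
      by (rule card_UN_le) simp
    have c3: "(\<Sum>j<k. card (snd (P j n) i)) \<le> (\<Sum>j<k. M j * h i)"
      by (rule sum_mono) (use P in auto)
    have c4: "(\<Sum>j<k. M j * h i) = (\<Sum>j<k. M j) * h i" by (simp add: sum_distrib_right)
    have "card (\<chi> i) \<le> mr * h i + (\<Sum>j<k. M j) * h i" using c1 c2 c3 c4 psi(3)[of i] by linarith
    then show "card (\<chi> i) \<le> m' * h i" unfolding m'_def by (simp add: algebra_simps)
  qed
  have "cond_with b h m' r'"
    unfolding cond_with_def r'_def using useq chiS N lu N'_def by auto
  then have r'E: "r' \<in> Ebh b h" unfolding Ebh_def by blast
  have le1: "le_E r' r"
    unfolding le_E_def r'_def rtp using pre u_ge x lu unfolding \<chi>_def by auto
  have le2: "le_E r' (P j n)" if "j < k" for j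
  proof -
    have "prefix (S j) u" using leL[OF that] pre prefix_order.trans by blast
    then show ?thesis unfolding le_E_def r'_def using P[OF that] nB'[OF that] lu that
      unfolding \<chi>_def by auto
  qed
  show ?thesis using nA r'E le1 le2 by blast
qed

theorem lemma3p8:
  fixes b :: "nat \<Rightarrow> enat" and h :: "nat \<Rightarrow> nat" and D :: "nat set set"
  assumes "\<forall>i. b i \<noteq> 0"
    and "(\<lambda>i. if b i = \<infinity> then 0 else real (h i) / real (the_enat (b i))) \<longlonglongrightarrow> 0"
    and "nonprincipal_ultrafilter D"
  shows "(\<forall>(k::nat) (S :: nat \<Rightarrow> nat list) (M :: nat \<Rightarrow> nat) (P :: nat \<Rightarrow> nat \<Rightarrow> cond) q.
            (\<forall>j<k. S j \<in> seq_b b \<and> (\<forall>n. P j n \<in> Ebh_sm b h (S j) (M j))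
                   \<and> forces_in_G (Ebh b h) le_E q (D_limit D (S j) (P j)))
            \<and> q \<in> Ebh b h
          \<longrightarrow> (\<forall>A\<in>D. \<forall>r\<in>Ebh b h. le_E r q \<longrightarrow>
                 (\<exists>n\<in>A. \<exists>r'\<in>Ebh b h. le_E r' r \<and> (\<forall>j<k. le_E r' (P j n)))))
         \<and> sigma_uf_linked (Ebh b h) le_E"
proof
  have bnd: "\<And>m. \<exists>N. \<forall>i\<ge>N. enat (m * h i) < b i"
    using eventually_bound assms(1,2) by blast
  show "\<forall>(k::nat) (S :: nat \<Rightarrow> nat list) (M :: nat \<Rightarrow> nat) (P :: nat \<Rightarrow> nat \<Rightarrow> cond) q.
            (\<forall>j<k. S j \<in> seq_b b \<and> (\<forall>n. P j n \<in> Ebh_sm b h (S j) (M j))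
                   \<and> forces_in_G (Ebh b h) le_E q (D_limit D (S j) (P j)))
            \<and> q \<in> Ebh b h
          \<longrightarrow> (\<forall>A\<in>D. \<forall>r\<in>Ebh b h. le_E r q \<longrightarrow>
                 (\<exists>n\<in>A. \<exists>r'\<in>Ebh b h. le_E r' r \<and> (\<forall>j<k. le_E r' (P j n))))"
  proof (intro allI impI ballI)
    fix k :: nat and S :: "nat \<Rightarrow> nat list" and M :: "nat \<Rightarrow> nat"
      and P :: "nat \<Rightarrow> nat \<Rightarrow> cond" and q :: cond and A :: "nat set" and r :: cond
    assume H: "(\<forall>j<k. S j \<in> seq_b b \<and> (\<forall>n. P j n \<in> Ebh_sm b h (S j) (M j))
                   \<and> forces_in_G (Ebh b h) le_E q (D_limit D (S j) (P j))) \<and> q \<in> Ebh b h"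
      and A: "A \<in> D" and rE: "r \<in> Ebh b h" and rq: "le_E r q"
    have "k' \<le> k \<Longrightarrow> \<exists>r2\<in>Ebh b h. le_E r2 r \<and> (\<forall>j<k'. le_E r2 (D_limit D (S j) (P j)))" for k' :: nat
    proof (induction k')
      case 0
      then show ?case using rE le_E_refl by blast
    next
      case (Suc k')
      then obtain r2 where r2: "r2 \<in> Ebh b h" "le_E r2 r"
        "\<forall>j<k'. le_E r2 (D_limit D (S j) (P j))" by auto
      have "le_E r2 q" using r2(2) rq le_E_trans by blast
      moreover have "k' < k" using Suc by simp
      ultimately have "compatible (Ebh b h) le_E r2 (D_limit D (S k') (P k'))"
        using H r2(1) unfolding forces_in_G_def by blast
      then obtain r3 where r3: "r3 \<in> Ebh b h" "le_E r3 r2" "le_E r3 (D_limit D (S k') (P k'))"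
        unfolding compatible_def by blast
      have "\<forall>j<Suc k'. le_E r3 (D_limit D (S j) (P j))"
        using r3 r2(3) le_E_trans less_Suc_eq by metis
      then show ?case using r3 r2(2) le_E_trans by blast
    qed
    then obtain r2 where r2: "r2 \<in> Ebh b h" "le_E r2 r"
        "\<forall>j<k. le_E r2 (D_limit D (S j) (P j))" by blast
    have Pc: "fst (P j n) = S j \<and> snd (P j n) i \<subseteq> {x. enat x < b i}
                 \<and> finite (snd (P j n) i) \<and> card (snd (P j n) i) \<le> M j * h i"
      if "j < k" for j n i
    proof -
      have PE: "P j n \<in> Ebh b h" "fst (P j n) = S j" "m_of b h (P j n) \<le> M j"
        using H that unfolding Ebh_sm_def by auto
      have "snd (P j n) \<in> S_bg b (\<lambda>i. m_of b h (P j n) * h i)"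
        using m_of_cond[OF PE(1)] unfolding cond_with_def by auto
      then have "snd (P j n) i \<subseteq> {x. enat x < b i} \<and> finite (snd (P j n) i)
          \<and> card (snd (P j n) i) \<le> m_of b h (P j n) * h i"
        unfolding S_bg_def by auto
      moreover have "m_of b h (P j n) * h i \<le> M j * h i" using PE(3) by simp
      ultimately show ?thesis using PE(2) by linarith
    qed
    have "\<exists>n\<in>A. \<exists>r'\<in>Ebh b h. le_E r' r2 \<and> (\<forall>j<k. le_E r' (P j n))"
      by (rule core[OF assms(3) bnd m_of_cond[OF r2(1)]]) (use Pc r2(3) A in auto)
    then obtain n r' where "n \<in> A" "r' \<in> Ebh b h" "le_E r' r2" "\<forall>j<k. le_E r' (P j n)"
      by blast
    then show "\<exists>n\<in>A. \<exists>r'\<in>Ebh b h. le_E r' r \<and> (\<forall>j<k. le_E r' (P j n))"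
      using r2(2) le_E_trans by blast
  qed
  define Q where "Q k = (case (from_nat k :: nat list \<times> nat) of (s, m) \<Rightarrow>
      {p. fst p = s \<and> cond_with b h m p})" for k
  have U: "Ebh b h = (\<Union>k. Q k)"
  proof
    show "Ebh b h \<subseteq> (\<Union>k. Q k)"
    proof
      fix p assume "p \<in> Ebh b h"
      then obtain m where "cond_with b h m p" unfolding Ebh_def by blast
      then have "p \<in> Q (to_nat (fst p, m))" unfolding Q_def by simp
      then show "p \<in> (\<Union>k. Q k)" by blast
    qed
    show "(\<Union>k. Q k) \<subseteq> Ebh b h"
      unfolding Q_def Ebh_def by (auto split: prod.splits)
  qed
  have "uf_linked (Ebh b h) le_E (Q k)" for k
  proof -
    obtain s m where sm: "(from_nat k :: nat list \<times> nat) = (s, m)"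
      by (cases "from_nat k :: nat list \<times> nat") blast
    have Qk: "Q k = {p. fst p = s \<and> cond_with b h m p}" unfolding Q_def sm by simp
    show ?thesis unfolding uf_linked_def
    proof (intro allI impI)
      fix D' :: "nat set set" and ps :: "nat \<Rightarrow> cond"
      assume D': "nonprincipal_ultrafilter D'" and psQ: "\<forall>n. ps n \<in> Q k"
      have ps: "fst (ps n) = s" "cond_with b h m (ps n)" for n using psQ Qk by auto
      have psc: "snd (ps n) i \<subseteq> {x. enat x < b i} \<and> finite (snd (ps n) i)
          \<and> card (snd (ps n) i) \<le> m * h i" for n i
        using ps(2)[of n] unfolding cond_with_def S_bg_def by auto
      define q where "q = D_limit D' s ps"
      define L where "L i = {y. {n. y \<in> snd (ps n) i} \<in> D'}" for i
      have q: "q = (s, L)" unfolding q_def D_limit_def L_def by simp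
      have Lsub: "L i \<subseteq> {x. enat x < b i}" for i
      proof
        fix y assume "y \<in> L i"
        then obtain n where "y \<in> snd (ps n) i" using uf_nonempty[OF D'] unfolding L_def by blast
        then show "y \<in> {x. enat x < b i}" using psc by blast
      qed
      have Lcard: "card F \<le> m * h i" if "finite F" "F \<subseteq> L i" for F i
      proof -
        have "(\<Inter>y\<in>F. {n. y \<in> snd (ps n) i}) \<in> D'"
          by (rule uf_INT[OF D' that(1)]) (use that L_def in auto)
        then obtain n where "n \<in> (\<Inter>y\<in>F. {n. y \<in> snd (ps n) i})" using uf_nonempty[OF D'] by blast
        then have "F \<subseteq> snd (ps n) i" by auto
        then have "card F \<le> card (snd (ps n) i)" using psc card_mono by blast
        then show ?thesis using psc by (meson le_trans)
      qed
      have Lfin: "finite (L i)" for i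
      proof (rule ccontr)
        assume "infinite (L i)"
        then obtain F where "finite F" "card F = Suc (m * h i)" "F \<subseteq> L i"
          using infinite_arbitrarily_large by blast
        then show False using Lcard by fastforce
      qed
      have "cond_with b h m q"
        unfolding cond_with_def q using ps[of 0] Lsub Lfin Lcard
        unfolding cond_with_def S_bg_def by auto
      then have qE: "q \<in> Ebh b h" unfolding Ebh_def by blast
      have "\<forall>A\<in>D'. \<forall>r\<in>Ebh b h. le_E r q \<longrightarrow> (\<exists>n\<in>A. compatible (Ebh b h) le_E r (ps n))"
      proof (intro ballI impI)
        fix A r assume A: "A \<in> D'" and rE: "r \<in> Ebh b h" and rq: "le_E r q"
        have Pc: "fst ((\<lambda>j. ps) j n) = (\<lambda>j. s) j \<and> snd ((\<lambda>j. ps) j n) i \<subseteq> {x. enat x < b i}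
                 \<and> finite (snd ((\<lambda>j. ps) j n) i) \<and> card (snd ((\<lambda>j. ps) j n) i) \<le> (\<lambda>j. m) j * h i"
          if "j < 1" for j n i using ps psc by simp
        have lq: "le_E r (D_limit D' ((\<lambda>j. s) j) ((\<lambda>j. ps) j))" if "j < (1::nat)" for j
          using rq q_def by simp
        have "\<exists>n\<in>A. \<exists>r'\<in>Ebh b h. le_E r' r \<and> (\<forall>j<(1::nat). le_E r' ((\<lambda>j. ps) j n))"
          by (rule core[OF D' bnd m_of_cond[OF rE], where M="\<lambda>j. m" and S="\<lambda>j. s"]) (use Pc lq A in auto)
        then obtain n r' where "n \<in> A" "r' \<in> Ebh b h" "le_E r' r" "le_E r' (ps n)" by auto
        then show "\<exists>n\<in>A. compatible (Ebh b h) le_E r (ps n)"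
          unfolding compatible_def by blast
      qed
      then show "\<exists>q\<in>Ebh b h. \<forall>A\<in>D'. \<forall>r\<in>Ebh b h. le_E r q \<longrightarrow>
          (\<exists>n\<in>A. compatible (Ebh b h) le_E r (ps n))" using qE by blast
    qed
  qed
  then show "sigma_uf_linked (Ebh b h) le_E"
    unfolding sigma_uf_linked_def using U by blast
qed

end
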